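(* Let $D$ be a unital commutative C*-algebra and $\Delta\subseteq\mathrm{T}(D)$ a closed convex set of tracial states whose set of extreme points $\partial\Delta$ is compact. Suppose $\Delta$ is ample with respect to a nonzero positive contraction $c=\overline{(c_n)}\in\ell^\infty(D)/J_{2,\omega,\Delta}$, where $(c_n)\in\ell^\infty(D)$ is a representative. Then $\lim_{k\to\omega}\sup_{\tau\in\partial\Delta}|\tau(ac_k)-\tau(a)\tau(c_k)|=0$ for every $a\in D$.
   Context: $\omega$ is a free ultrafilter on $\mathbb N$; $J_{2,\omega,\Delta}=\{(f_n)\in\ell^\infty(D):\lim_{n\to\omega}\sup_{\tau\in\Delta}\tau(|f_n|^2)=0\}$. For a sequence $(\tau_n)$ in $\Delta$, $(\tau_n)_\omega$ denotes the trace $(a_n)\mapsto\lim_{n\to\omega}\tau_n(a_n)$ on $\ell^\infty(D)$ (it vanishes on $J_{2,\omega,\Delta}$); elements of $D$ are regarded as constant sequences. $\Delta$ is ample with respect to $c$ if for every sequence $(\tau_n)$ in $\Delta$ the functionals $x\mapsto(\tau_n)_\omega(xc)/(\tau_n)_\omega(c)$ and $x\mapsto(\tau_n)_\omega(x(1-c))/(1-(\tau_n)_\omega(c))$ on $D$ belong to $\Delta$ (when $(\tau_n)_\omega(c)=0$ only the second is required; when it equals $1$ only the first). *)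

theory Defs
  imports "HOL-Analysis.Analysis"
begin

text \<open>A unital commutative C*-algebra: the carrier type 'a is a commutative unital
  real Banach algebra (norm 1 = 1), equipped with a complex scalar multiplication
  scC extending the real one, and an involution st satisfying the C*-identity.\<close>

definition comm_cstar_alg ::
  "(complex \<Rightarrow> 'a::{comm_ring_1,real_normed_algebra_1,banach} \<Rightarrow> 'a) \<Rightarrow> ('a \<Rightarrow> 'a) \<Rightarrow> bool" where
  "comm_cstar_alg scC st \<longleftrightarrow>
     (\<forall>z w x. scC z (scC w x) = scC (z * w) x) \<and>
     (\<forall>z x y. scC z (x + y) = scC z x + scC z y) \<and>
     (\<forall>z w x. scC (z + w) x = scC z x + scC w x) \<and>
     (\<forall>r x. scC (complex_of_real r) x = r *\<^sub>R x) \<and>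
     (\<forall>z x y. scC z (x * y) = scC z x * y) \<and>
     (\<forall>z x. norm (scC z x) = cmod z * norm x) \<and>
     (\<forall>x. st (st x) = x) \<and>
     (\<forall>x y. st (x + y) = st x + st y) \<and>
     (\<forall>z x. st (scC z x) = scC (cnj z) (st x)) \<and>
     (\<forall>x y. st (x * y) = st y * st x) \<and>
     (\<forall>x. norm (st x * x) = (norm x)\<^sup>2)"

definition tracial_states ::
  "(complex \<Rightarrow> 'a::{comm_ring_1,real_normed_algebra_1,banach} \<Rightarrow> 'a) \<Rightarrow> ('a \<Rightarrow> 'a) \<Rightarrow> ('a \<Rightarrow> complex) set" where
  "tracial_states scC st = {\<tau>.
     (\<forall>x y. \<tau> (x + y) = \<tau> x + \<tau> y) \<and>
     (\<forall>z x. \<tau> (scC z x) = z * \<tau> x) \<and>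
     (\<forall>x. Im (\<tau> (st x * x)) = 0 \<and> 0 \<le> Re (\<tau> (st x * x))) \<and>
     \<tau> 1 = 1 \<and>
     (\<forall>x y. \<tau> (x * y) = \<tau> (y * x))}"

definition fconvex :: "('a \<Rightarrow> complex) set \<Rightarrow> bool" where
  "fconvex S \<longleftrightarrow> (\<forall>\<sigma>\<in>S. \<forall>\<rho>\<in>S. \<forall>t::real. 0 \<le> t \<and> t \<le> 1 \<longrightarrow>
      (\<lambda>x. complex_of_real t * \<sigma> x + complex_of_real (1 - t) * \<rho> x) \<in> S)"

definition fextreme_points :: "('a \<Rightarrow> complex) set \<Rightarrow> ('a \<Rightarrow> complex) set" where
  "fextreme_points S = {\<tau>\<in>S. \<forall>\<sigma>\<in>S. \<forall>\<rho>\<in>S. \<forall>t::real. 0 < t \<and> t < 1 \<and>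
      \<tau> = (\<lambda>x. complex_of_real t * \<sigma> x + complex_of_real (1 - t) * \<rho> x) \<longrightarrow> \<sigma> = \<rho>}"

definition free_ultrafilter :: "nat filter \<Rightarrow> bool" where
  "free_ultrafilter F \<longleftrightarrow> F \<noteq> bot \<and> (\<forall>P. eventually P F \<or> eventually (\<lambda>n. \<not> P n) F) \<and>
      (\<forall>m. eventually (\<lambda>n. n \<noteq> m) F)"

definition sup0 :: "real set \<Rightarrow> real" where
  "sup0 S = (if S = {} then 0 else Sup S)"

definition linfty :: "(nat \<Rightarrow> 'a::real_normed_vector) set" where
  "linfty = {f. \<exists>B. \<forall>n. norm (f n) \<le> B}"

definition linfty_norm :: "(nat \<Rightarrow> 'a::real_normed_vector) \<Rightarrow> real" where
  "linfty_norm f = Sup (range (\<lambda>n. norm (f n)))"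

definition J2 :: "('a \<Rightarrow> 'a) \<Rightarrow> nat filter \<Rightarrow> ('a \<Rightarrow> complex) set
     \<Rightarrow> (nat \<Rightarrow> 'a::{comm_ring_1,real_normed_algebra_1,banach}) set" where
  "J2 st \<omega> \<Delta> = {f \<in> linfty.
      ((\<lambda>n. sup0 ((\<lambda>\<tau>. Re (\<tau> (st (f n) * f n))) ` \<Delta>)) \<longlongrightarrow> 0) \<omega>}"

definition ulim_trace :: "nat filter \<Rightarrow> (nat \<Rightarrow> 'a \<Rightarrow> complex) \<Rightarrow> (nat \<Rightarrow> 'a) \<Rightarrow> complex" where
  "ulim_trace \<omega> \<tau>s a = Lim \<omega> (\<lambda>n. \<tau>s n (a n))"

definition ample :: "nat filter \<Rightarrow> ('a \<Rightarrow> complex) set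
     \<Rightarrow> (nat \<Rightarrow> 'a::{comm_ring_1,real_normed_algebra_1,banach}) \<Rightarrow> bool" where
  "ample \<omega> \<Delta> c \<longleftrightarrow> (\<forall>\<tau>s. (\<forall>n. \<tau>s n \<in> \<Delta>) \<longrightarrow>
      (ulim_trace \<omega> \<tau>s c \<noteq> 0 \<longrightarrow>
         (\<lambda>x. ulim_trace \<omega> \<tau>s (\<lambda>n. x * c n) / ulim_trace \<omega> \<tau>s c) \<in> \<Delta>) \<and>
      (ulim_trace \<omega> \<tau>s c \<noteq> 1 \<longrightarrow>
         (\<lambda>x. ulim_trace \<omega> \<tau>s (\<lambda>n. x * (1 - c n)) / (1 - ulim_trace \<omega> \<tau>s c)) \<in> \<Delta>))"

text \<open>The class of c in ell-infinity(D)/J is a positive contraction: it is of the form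
  d* d modulo J, and its quotient norm is at most 1.\<close>
definition quot_pos_contraction :: "('a \<Rightarrow> 'a) \<Rightarrow> (nat \<Rightarrow> 'a) set
     \<Rightarrow> (nat \<Rightarrow> 'a::{comm_ring_1,real_normed_algebra_1,banach}) \<Rightarrow> bool" where
  "quot_pos_contraction st J c \<longleftrightarrow>
     (\<exists>d\<in>linfty. (\<lambda>n. c n - st (d n) * d n) \<in> J) \<and>
     Inf ((\<lambda>j. linfty_norm (\<lambda>n. c n + j n)) ` J) \<le> 1"

end

theory Submission imports Defs "HOL-Analysis.FPS_Convergence"
begin

locale cst =
  fixes scC :: "complex \<Rightarrow> 'a::{comm_ring_1,real_normed_algebra_1,banach} \<Rightarrow> 'a"
    and st :: "'a \<Rightarrow> 'a"
  assumes ax: "comm_cstar_alg scC st"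
begin

lemmas axs = ax[unfolded comm_cstar_alg_def]

lemma sc_comp: "scC z (scC w x) = scC (z * w) x" using axs[THEN conjunct1] by blast
lemma sc_add: "scC z (x + y) = scC z x + scC z y" using axs[THEN conjunct2, THEN conjunct1] by blast
lemma sc_add2: "scC (z + w) x = scC z x + scC w x" using axs[THEN conjunct2, THEN conjunct2, THEN conjunct1] by blast
lemma sc_real: "scC (complex_of_real r) x = r *\<^sub>R x" using axs[THEN conjunct2, THEN conjunct2, THEN conjunct2, THEN conjunct1] by blast
lemma sc_mult: "scC z (x * y) = scC z x * y" using axs[THEN conjunct2, THEN conjunct2, THEN conjunct2, THEN conjunct2, THEN conjunct1] by blast
lemma sc_norm: "norm (scC z x) = cmod z * norm x" using axs[THEN conjunct2, THEN conjunct2, THEN conjunct2, THEN conjunct2, THEN conjunct2, THEN conjunct1] by blast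
lemma st_st[simp]: "st (st x) = x" using axs[THEN conjunct2, THEN conjunct2, THEN conjunct2, THEN conjunct2, THEN conjunct2, THEN conjunct2, THEN conjunct1] by blast
lemma st_add: "st (x + y) = st x + st y" using axs[THEN conjunct2, THEN conjunct2, THEN conjunct2, THEN conjunct2, THEN conjunct2, THEN conjunct2, THEN conjunct2, THEN conjunct1] by blast
lemma st_sc: "st (scC z x) = scC (cnj z) (st x)" using axs[THEN conjunct2, THEN conjunct2, THEN conjunct2, THEN conjunct2, THEN conjunct2, THEN conjunct2, THEN conjunct2, THEN conjunct2, THEN conjunct1] by blast
lemma st_mult: "st (x * y) = st y * st x" using axs[THEN conjunct2, THEN conjunct2, THEN conjunct2, THEN conjunct2, THEN conjunct2, THEN conjunct2, THEN conjunct2, THEN conjunct2, THEN conjunct2, THEN conjunct1] by blast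
lemma cstar: "norm (st x * x) = (norm x)\<^sup>2" using axs[THEN conjunct2, THEN conjunct2, THEN conjunct2, THEN conjunct2, THEN conjunct2, THEN conjunct2, THEN conjunct2, THEN conjunct2, THEN conjunct2, THEN conjunct2] by blast

lemma sc_one_left[simp]: "scC 1 x = x" using sc_real[of 1 x] by simp
lemma sc_mult2: "scC z (x * y) = x * scC z y"
  by (metis sc_mult mult.commute)

lemma st_scaleR: "st (r *\<^sub>R x) = r *\<^sub>R st x"
  using st_sc[of "complex_of_real r" x] by (simp add: sc_real)

lemma st_one[simp]: "st 1 = 1"
proof -
  have "st (st 1 * 1) = st 1 * st (st 1)" by (rule st_mult)
  then show ?thesis by simp
qed

lemma st_0[simp]: "st 0 = 0"
  by (metis scale_zero_left st_scaleR)

lemma st_minus: "st (- x) = - st x"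
  by (metis scaleR_minus1_left st_scaleR)

lemma st_diff: "st (x - y) = st x - st y"
  by (metis diff_conv_add_uminus st_add st_minus)

lemma st_power: "st (x ^ n) = (st x) ^ n"
  by (induct n) (auto simp: st_mult mult.commute)

lemma norm_st_le: "norm x \<le> norm (st x)"
proof (cases "x = 0")
  case False
  have "(norm x)^2 \<le> norm (st x) * norm x" using cstar[of x] norm_mult_ineq[of "st x" x] by simp
  then show ?thesis using False by (simp add: power2_eq_square)
qed simp

lemma norm_st[simp]: "norm (st x) = norm x"
  using norm_st_le[of x] norm_st_le[of "st x"] by simp

lemma bl_st: "bounded_linear st"
  by (rule bounded_linear_intro[where K=1]) (auto simp: st_add st_scaleR)


definition posf :: "('a \<Rightarrow> complex) \<Rightarrow> bool" where
  "posf \<phi> \<longleftrightarrow> (\<forall>x y. \<phi> (x + y) = \<phi> x + \<phi> y) \<and> (\<forall>z x. \<phi> (scC z x) = z * \<phi> x) \<and>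
     (\<forall>x. Im (\<phi> (st x * x)) = 0 \<and> 0 \<le> Re (\<phi> (st x * x)))"

lemma posf_add: "posf \<phi> \<Longrightarrow> \<phi> (x + y) = \<phi> x + \<phi> y" unfolding posf_def by blast
lemma posf_sc: "posf \<phi> \<Longrightarrow> \<phi> (scC z x) = z * \<phi> x" unfolding posf_def by blast
lemma posf_Im: "posf \<phi> \<Longrightarrow> Im (\<phi> (st x * x)) = 0" unfolding posf_def by blast
lemma posf_Re: "posf \<phi> \<Longrightarrow> 0 \<le> Re (\<phi> (st x * x))" unfolding posf_def by blast

lemma posf_scaleR: "posf \<phi> \<Longrightarrow> \<phi> (r *\<^sub>R x) = complex_of_real r * \<phi> x"
  using posf_sc[of \<phi> "complex_of_real r" x] by (simp add: sc_real)
lemma posf_0: "posf \<phi> \<Longrightarrow> \<phi> 0 = 0"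
  using posf_scaleR[of \<phi> 0 0] by simp
lemma posf_minus: "posf \<phi> \<Longrightarrow> \<phi> (- x) = - \<phi> x"
  using posf_scaleR[of \<phi> "-1" x] by simp
lemma posf_diff: "posf \<phi> \<Longrightarrow> \<phi> (x - y) = \<phi> x - \<phi> y"
  by (metis diff_conv_add_uminus posf_add posf_minus)
lemma posf_one_Im: "posf \<phi> \<Longrightarrow> Im (\<phi> 1) = 0"
  using posf_Im[of \<phi> 1] by simp

lemma expand1:
  "st (x + scC l 1) * (x + scC l 1) = st x * x + scC l (st x) + scC (cnj l) x + scC (cnj l * l) 1"
proof -
  have s: "st (x + scC l 1) = st x + scC (cnj l) 1" by (simp add: st_add st_sc)
  have a: "st x * scC l 1 = scC l (st x)" using sc_mult2[of l "st x" 1] by simp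
  have b: "scC (cnj l) 1 * x = scC (cnj l) x" using sc_mult[of "cnj l" 1 x] by simp
  have c: "scC (cnj l) 1 * scC l 1 = scC (cnj l * l) 1"
    using sc_mult[of "cnj l" 1 "scC l 1"] sc_comp[of "cnj l" l 1] by simp
  have "st (x + scC l 1) * (x + scC l 1) = st x * x + st x * scC l 1 + scC (cnj l) 1 * x + scC (cnj l) 1 * scC l 1"
    unfolding s by (simp add: algebra_simps)
  then show ?thesis using a b c by simp
qed

lemma posf_expand:
  assumes "posf \<phi>"
  shows "\<phi> (st (x + scC l 1) * (x + scC l 1)) = \<phi> (st x * x) + l * \<phi> (st x) + cnj l * \<phi> x + cnj l * l * \<phi> 1"
  unfolding expand1 using assms by (simp add: posf_add posf_sc)

lemma posf_herm:
  assumes p: "posf \<phi>"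
  shows "\<phi> (st x) = cnj (\<phi> x)"
proof -
  have q: "Im (\<phi> (st x * x)) = 0" and pp: "Im (\<phi> 1) = 0" using p posf_Im posf_one_Im by auto
  have e1: "Im (\<phi> (st (x + scC 1 1) * (x + scC 1 1))) = 0" using p posf_Im by blast
  have e2: "Im (\<phi> (st (x + scC \<i> 1) * (x + scC \<i> 1))) = 0" using p posf_Im by blast
  from e1 have "Im (\<phi> (st x)) + Im (\<phi> x) = 0" unfolding posf_expand[OF p] using q pp by simp
  moreover from e2 have "Re (\<phi> (st x)) - Re (\<phi> x) = 0" unfolding posf_expand[OF p] using q pp by simp
  ultimately show ?thesis by (simp add: complex_eq_iff)
qed

lemma posf_Re_expand:
  assumes p: "posf \<phi>"
  shows "Re (\<phi> (st x * x)) + 2 * Re (l * cnj (\<phi> x)) + (cmod l)^2 * Re (\<phi> 1) \<ge> 0"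
proof -
  have q: "Im (\<phi> (st x * x)) = 0" and pp: "Im (\<phi> 1) = 0" using p posf_Im posf_one_Im by auto
  have "0 \<le> Re (\<phi> (st (x + scC l 1) * (x + scC l 1)))" using p posf_Re by blast
  also have "\<dots> = Re (\<phi> (st x * x)) + 2 * Re (l * cnj (\<phi> x)) + (cmod l)^2 * Re (\<phi> 1)"
    unfolding posf_expand[OF p] posf_herm[OF p] using pp cmod_power2[of l]
    by (simp add: algebra_simps power2_eq_square)
  finally show ?thesis by simp
qed

lemma posf_CS:
  assumes p: "posf \<phi>"
  shows "(cmod (\<phi> x))^2 \<le> Re (\<phi> 1) * Re (\<phi> (st x * x))"
proof -
  define b where "b = (cmod (\<phi> x))^2"
  define P where "P = Re (\<phi> 1)"
  define Q where "Q = Re (\<phi> (st x * x))"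
  have P0: "P \<ge> 0" using posf_Re[OF p, of 1] unfolding P_def by simp
  have Q0: "Q \<ge> 0" using posf_Re[OF p, of x] unfolding Q_def by simp
  have key: "Q - 2 * r * b + r^2 * b * P \<ge> 0" for r :: real
  proof -
    have "Re (complex_of_real (- r) * \<phi> x * cnj (\<phi> x)) = - r * b"
      unfolding b_def using cmod_power2[of "\<phi> x"] by (simp add: complex_mult_cnj power2_eq_square algebra_simps)
    moreover have "(cmod (complex_of_real (- r) * \<phi> x))^2 = r^2 * b"
      unfolding b_def by (simp add: norm_mult power_mult_distrib)
    ultimately show ?thesis using posf_Re_expand[OF p, of x "complex_of_real (- r) * \<phi> x"]
      unfolding P_def Q_def by (simp add: algebra_simps)
  qed
  show ?thesis
  proof (cases "P = 0")
    case True
    have "b \<le> 0"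
    proof (rule ccontr)
      assume "\<not> b \<le> 0"
      then have "b > 0" by simp
      have "Q - 2 * ((Q + 1) / (2 * b)) * b \<ge> 0" using key[of "(Q + 1) / (2 * b)"] True by simp
      with \<open>b > 0\<close> show False by (simp add: field_simps)
    qed
    moreover have "b \<ge> 0" unfolding b_def by simp
    ultimately show ?thesis unfolding b_def P_def[symmetric] Q_def[symmetric] using True by simp
  next
    case False
    then have "P > 0" using P0 by simp
    have "Q - 2 * (1 / P) * b + (1 / P)^2 * b * P \<ge> 0" using key[of "1 / P"] .
    then have "Q - b / P \<ge> 0" using \<open>P > 0\<close> by (simp add: field_simps power2_eq_square)
    then show ?thesis unfolding b_def[symmetric] P_def[symmetric] Q_def[symmetric]
      using \<open>P > 0\<close> by (simp add: field_simps)
  qed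
qed


lemma gb_step: "((a::real) gchoose Suc k) * of_nat (Suc k) = (a gchoose k) * (a - of_nat k)"
proof -
  have "(a gchoose Suc k) * fact (Suc k) = (\<Prod>i = 0..<Suc k. a - of_nat i)" by (rule gbinomial_mult_fact')
  also have "\<dots> = (\<Prod>i = 0..<k. a - of_nat i) * (a - of_nat k)" by simp
  also have "\<dots> = (a gchoose k) * fact k * (a - of_nat k)" by (simp add: gbinomial_mult_fact')
  finally have "(a gchoose Suc k) * of_nat (Suc k) * fact k = (a gchoose k) * (a - of_nat k) * fact k"
    by (simp add: fact_Suc algebra_simps)
  then show ?thesis by simp
qed

lemma gb_half_bound: "\<bar>(1/2::real) gchoose n\<bar> \<le> 1"
proof (induct n)
  case 0 then show ?case by simp
next
  case (Suc k)
  have e0: "((1/2::real) gchoose Suc k) * (real k + 1) = ((1/2::real) gchoose k) * (1/2 - real k)"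
    using gb_step[of "1/2" k] by (simp add: algebra_simps)
  have e: "\<bar>(1/2::real) gchoose Suc k\<bar> * (real k + 1) = \<bar>(1/2::real) gchoose k\<bar> * \<bar>1/2 - real k\<bar>"
  proof -
    have "\<bar>(1/2::real) gchoose Suc k\<bar> * (real k + 1) = \<bar>((1/2::real) gchoose Suc k) * (real k + 1)\<bar>"
      by (simp add: abs_mult)
    also have "\<dots> = \<bar>((1/2::real) gchoose k) * (1/2 - real k)\<bar>" using e0 by (rule arg_cong)
    also have "\<dots> = \<bar>(1/2::real) gchoose k\<bar> * \<bar>1/2 - real k\<bar>" by (rule abs_mult)
    finally show ?thesis .
  qed
  have "\<bar>(1/2::real) gchoose k\<bar> * \<bar>1/2 - real k\<bar> \<le> 1 * (real k + 1)"
    by (rule mult_mono) (use Suc in auto)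
  then show ?case using e by (smt (verit) mult_le_cancel_right2 of_nat_0_le_iff)
qed

lemma one_gchoose: "(1::real) gchoose n = (if n = 0 \<or> n = 1 then 1 else 0)"
proof -
  have "(1::real) gchoose n = of_nat (1 choose n)" by (metis binomial_gbinomial of_nat_1)
  then show ?thesis by (cases n) (auto simp: binomial_eq_0)
qed

lemma sqrt_exists:
  assumes sa: "st h = h" and nh: "norm h < 1"
  shows "\<exists>w. st w * w = 1 - h"
proof -
  define g where "g n = ((1/2::real) gchoose n)" for n
  define a where "a n = g n *\<^sub>R (- h) ^ n" for n
  have na: "norm (a n) \<le> norm h ^ n" for n
  proof -
    have "norm (a n) = \<bar>g n\<bar> * norm ((- h) ^ n)" unfolding a_def by simp
    also have "\<dots> \<le> 1 * norm h ^ n"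
      apply (rule mult_mono) using gb_half_bound[of n] norm_power_ineq[of "- h" n] by (auto simp: g_def)
    finally show ?thesis by simp
  qed
  have sn: "summable (\<lambda>n. norm (a n))"
    by (rule summable_comparison_test[OF _ summable_geometric[of "norm h"]]) (use na nh in auto)
  define W where "W = suminf a"
  have "(\<lambda>k. \<Sum>i\<le>k. a i * a (k - i)) sums (W * W)"
    unfolding W_def by (rule Cauchy_product_sums[OF sn sn])
  moreover have "(\<Sum>i\<le>k. a i * a (k - i)) = ((1::real) gchoose k) *\<^sub>R (- h) ^ k" for k
  proof -
    have "(\<Sum>i\<le>k. a i * a (k - i)) = (\<Sum>i\<le>k. (g i * g (k - i)) *\<^sub>R (- h) ^ k)"
    proof (rule sum.cong)
      fix i assume "i \<in> {..k}"
      then have "(- h) ^ i * (- h) ^ (k - i) = (- h) ^ k" by (simp add: power_add[symmetric])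
      then show "a i * a (k - i) = (g i * g (k - i)) *\<^sub>R (- h) ^ k"
        unfolding a_def by (simp add: scaleR_scaleR[symmetric] del: scaleR_scaleR) (metis scaleR_scaleR mult.commute)
    qed simp
    also have "\<dots> = (\<Sum>i\<le>k. g i * g (k - i)) *\<^sub>R (- h) ^ k" by (simp add: scaleR_sum_left)
    also have "(\<Sum>i\<le>k. g i * g (k - i)) = (1::real) gchoose k"
      using gbinomial_Vandermonde[of "1/2::real" "1/2" k] unfolding g_def by (simp add: atLeast0AtMost)
    finally show ?thesis .
  qed
  ultimately have s1: "(\<lambda>k. ((1::real) gchoose k) *\<^sub>R (- h) ^ k) sums (W * W)" by simp
  have s2: "(\<lambda>k. ((1::real) gchoose k) *\<^sub>R (- h) ^ k) sums (\<Sum>k\<in>{0,1}. ((1::real) gchoose k) *\<^sub>R (- h) ^ k)"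
    by (rule sums_finite) (auto simp: one_gchoose)
  have WW: "W * W = 1 - h" using sums_unique2[OF s1 s2] by simp
  have suma: "summable a" using sn summable_norm_cancel by blast
  have "st W = (\<Sum>n. st (a n))" unfolding W_def by (rule bounded_linear.suminf[OF bl_st suma])
  also have "(\<lambda>n. st (a n)) = a" unfolding a_def by (auto simp: st_scaleR st_power st_minus sa)
  finally have "st W = W" unfolding W_def .
  then show ?thesis using WW by (intro exI[of _ W]) simp
qed


lemma posf_bound_sq:
  assumes p: "posf \<phi>"
  shows "Re (\<phi> (st x * x)) \<le> (norm x)^2 * Re (\<phi> 1)"
proof -
  define B where "B = Re (\<phi> (st x * x))"
  define P where "P = Re (\<phi> 1)"
  define n where "n = (norm x)^2"
  have P0: "P \<ge> 0" using posf_Re[OF p, of 1] unfolding P_def by simp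
  have n0: "n \<ge> 0" unfolding n_def by simp
  have main: "B \<le> (n + e) * P" if e: "e > 0" for e
  proof -
    define s where "s = n + e"
    have s0: "s > 0" using n0 e unfolding s_def by simp
    define h where "h = (1 / s) *\<^sub>R (st x * x)"
    have sh: "st h = h" unfolding h_def by (simp add: st_scaleR st_mult)
    have nh: "norm h = n / s" unfolding h_def n_def using s0 by (simp add: cstar)
    have "norm h < 1" unfolding nh using s0 e unfolding s_def by simp
    then obtain w where w: "st w * w = 1 - h" using sqrt_exists[OF sh] by blast
    have "0 \<le> Re (\<phi> (st w * w))" by (rule posf_Re[OF p])
    also have "\<phi> (st w * w) = \<phi> 1 - complex_of_real (1 / s) * \<phi> (st x * x)"
      unfolding w h_def by (simp add: posf_diff[OF p] posf_scaleR[OF p])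
    finally have "0 \<le> P - B / s" unfolding P_def B_def by simp
    then show ?thesis using s0 unfolding s_def[symmetric] by (simp add: field_simps)
  qed
  have "B \<le> n * P"
  proof (rule ccontr)
    assume "\<not> B \<le> n * P"
    then have lt: "B > n * P" by simp
    show False
    proof (cases "P = 0")
      case True then show False using main[of 1] lt by simp
    next
      case False
      then have "P > 0" using P0 by simp
      have "B \<le> (n + (B - n * P) / (2 * P)) * P" using main[of "(B - n * P) / (2 * P)"] lt \<open>P > 0\<close> by simp
      also have "\<dots> = n * P + (B - n * P) / 2" using \<open>P > 0\<close> by (simp add: field_simps)
      finally have "B \<le> n * P + (B - n * P) / 2" .
      then show False using lt by (simp add: field_simps)
    qed
  qed
  then show ?thesis unfolding B_def n_def P_def .
qed

lemma posf_bound: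
  assumes p: "posf \<phi>"
  shows "cmod (\<phi> x) \<le> Re (\<phi> 1) * norm x"
proof -
  have P0: "Re (\<phi> 1) \<ge> 0" using posf_Re[OF p, of 1] by simp
  have "(cmod (\<phi> x))^2 \<le> Re (\<phi> 1) * Re (\<phi> (st x * x))" by (rule posf_CS[OF p])
  also have "\<dots> \<le> Re (\<phi> 1) * ((norm x)^2 * Re (\<phi> 1))"
    by (rule mult_left_mono[OF posf_bound_sq[OF p] P0])
  also have "\<dots> = (Re (\<phi> 1) * norm x)^2" by (simp add: power2_eq_square)
  finally show ?thesis by (rule power2_le_imp_le) (use P0 in simp)
qed

definition trs :: "('a \<Rightarrow> complex) \<Rightarrow> bool" where
  "trs \<tau> \<longleftrightarrow> \<tau> \<in> tracial_states scC st"

lemma trs_posf: "trs \<tau> \<Longrightarrow> posf \<tau>"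
  unfolding trs_def tracial_states_def posf_def by blast
lemma trs_one: "trs \<tau> \<Longrightarrow> \<tau> 1 = 1"
  unfolding trs_def tracial_states_def by blast

lemma trs_bound: "trs \<tau> \<Longrightarrow> cmod (\<tau> x) \<le> norm x"
  using posf_bound[OF trs_posf, of \<tau> x] trs_one[of \<tau>] by simp

lemma trs_Re_le: "trs \<tau> \<Longrightarrow> Re (\<tau> (st x * x)) \<le> (norm x)^2"
  using posf_bound_sq[OF trs_posf, of \<tau> x] trs_one[of \<tau>] by simp

lemma trs_CS: "trs \<tau> \<Longrightarrow> (cmod (\<tau> x))^2 \<le> Re (\<tau> (st x * x))"
  using posf_CS[OF trs_posf, of \<tau> x] trs_one[of \<tau>] by simp

lemma weighted_posf:
  assumes t: "trs \<tau>"
  shows "posf (\<lambda>x. \<tau> (st y * y * x))"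
proof -
  have p: "posf \<tau>" by (rule trs_posf[OF t])
  have e1: "st y * y * (st x * x) = st (x * y) * (x * y)" for x by (simp add: st_mult algebra_simps)
  have e2: "st y * y * scC z x = scC z (st y * y * x)" for z x by (simp add: sc_mult2)
  show ?thesis unfolding posf_def
  proof (intro conjI allI)
    fix a b show "\<tau> (st y * y * (a + b)) = \<tau> (st y * y * a) + \<tau> (st y * y * b)"
      by (simp add: distrib_left posf_add[OF p])
  next
    fix z x show "\<tau> (st y * y * scC z x) = z * \<tau> (st y * y * x)"
      unfolding e2 by (rule posf_sc[OF p])
  next
    fix x show "Im (\<tau> (st y * y * (st x * x))) = 0" unfolding e1 by (rule posf_Im[OF p])
  next
    fix x show "0 \<le> Re (\<tau> (st y * y * (st x * x)))" unfolding e1 by (rule posf_Re[OF p])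
  qed
qed

lemma weighted_bound:
  assumes t: "trs \<tau>"
  shows "cmod (\<tau> (st y * y * w)) \<le> Re (\<tau> (st y * y)) * norm w"
  using posf_bound[OF weighted_posf[OF t, of y], of w] by simp

lemma trs_Jbound:
  assumes t: "trs \<tau>"
  shows "(cmod (\<tau> (z * j)))^2 \<le> (norm z)^2 * Re (\<tau> (st j * j))"
proof -
  have "(cmod (\<tau> (z * j)))^2 \<le> Re (\<tau> (st (z * j) * (z * j)))" by (rule trs_CS[OF t])
  also have "st (z * j) * (z * j) = st j * j * (st z * z)" by (simp add: st_mult algebra_simps)
  also have "Re (\<tau> (st j * j * (st z * z))) \<le> cmod (\<tau> (st j * j * (st z * z)))" by (rule complex_Re_le_cmod)
  also have "\<dots> \<le> Re (\<tau> (st j * j)) * norm (st z * z)" by (rule weighted_bound[OF t])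
  also have "\<dots> = (norm z)^2 * Re (\<tau> (st j * j))" by (simp add: cstar)
  finally show ?thesis .
qed


end

lemma uf_nonbot: "free_ultrafilter \<omega> \<Longrightarrow> \<omega> \<noteq> bot"
  unfolding free_ultrafilter_def by blast
lemma uf_ultra: "free_ultrafilter \<omega> \<Longrightarrow> eventually P \<omega> \<or> eventually (\<lambda>n. \<not> P n) \<omega>"
  unfolding free_ultrafilter_def by blast

lemma uf_compact:
  fixes f :: "nat \<Rightarrow> 'b::topological_space"
  assumes uf: "free_ultrafilter \<omega>" and K: "compact K" and fK: "\<And>n. f n \<in> K"
  shows "\<exists>l\<in>K. (f \<longlongrightarrow> l) \<omega>"
proof -
  define F where "F = filtermap f \<omega>"
  have "F \<noteq> bot" unfolding F_def using uf_nonbot[OF uf] by (simp add: filtermap_bot_iff)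
  moreover have "eventually (\<lambda>x. x \<in> K) F" unfolding F_def eventually_filtermap using fK by simp
  ultimately obtain l where l: "l \<in> K" "inf (nhds l) F \<noteq> bot" using K unfolding compact_filter by blast
  have "(f \<longlongrightarrow> l) \<omega>"
    unfolding tendsto_def
  proof (intro allI impI)
    fix S :: "'b set" assume S: "open S" "l \<in> S"
    show "eventually (\<lambda>n. f n \<in> S) \<omega>"
    proof (rule ccontr)
      assume "\<not> eventually (\<lambda>n. f n \<in> S) \<omega>"
      then have "eventually (\<lambda>n. f n \<notin> S) \<omega>" using uf_ultra[OF uf, of "\<lambda>n. f n \<in> S"] by blast
      then have e1: "eventually (\<lambda>x. x \<notin> S) F" unfolding F_def eventually_filtermap .
      have e2: "eventually (\<lambda>x. x \<in> S) (nhds l)" using S by (rule eventually_nhds_in_open)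
      have "eventually (\<lambda>x. False) (inf (nhds l) F)"
        unfolding eventually_inf using e1 e2 by blast
      then show False using l(2) by (simp add: eventually_False)
    qed
  qed
  then show ?thesis using l(1) by blast
qed

lemma uf_conv:
  fixes u :: "nat \<Rightarrow> complex"
  assumes uf: "free_ultrafilter \<omega>" and b: "\<And>n. cmod (u n) \<le> B"
  shows "(u \<longlongrightarrow> Lim \<omega> u) \<omega>"
proof -
  obtain l where "(u \<longlongrightarrow> l) \<omega>" using uf_compact[OF uf compact_cball[of 0 B], of u] b by auto
  moreover have "\<not> trivial_limit \<omega>" using uf_nonbot[OF uf] by (simp add: trivial_limit_def)
  ultimately show ?thesis using tendsto_Lim by metis
qed

lemma fun_pointwise:
  fixes \<tau>s :: "nat \<Rightarrow> 'a \<Rightarrow> complex"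
  assumes "(\<tau>s \<longlongrightarrow> \<tau>) F"
  shows "((\<lambda>n. \<tau>s n x) \<longlongrightarrow> \<tau> x) F"
  using continuous_on_tendsto_compose[OF continuous_on_product_coordinates[of x] assms] by simp


locale setting = cst scC st
  for scC :: "complex \<Rightarrow> 'a::{comm_ring_1,real_normed_algebra_1,banach} \<Rightarrow> 'a" and st +
  fixes \<omega> :: "nat filter" and \<Delta> :: "('a \<Rightarrow> complex) set" and c :: "nat \<Rightarrow> 'a"
  assumes uf: "free_ultrafilter \<omega>" and Dtr: "\<Delta> \<subseteq> tracial_states scC st" and cl: "c \<in> linfty"
    and qp: "quot_pos_contraction st (J2 st \<omega> \<Delta>) c" and amp: "ample \<omega> \<Delta> c"
begin

lemma trsD: "\<tau> \<in> \<Delta> \<Longrightarrow> trs \<tau>" using Dtr unfolding trs_def by blast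

lemma nb: "\<omega> \<noteq> bot" by (rule uf_nonbot[OF uf])

lemma lim_uniq: "(f \<longlongrightarrow> a) \<omega> \<Longrightarrow> (f \<longlongrightarrow> b) \<omega> \<Longrightarrow> a = (b::complex)"
  using tendsto_unique[OF nb] by blast

lemma Bc: obtains Bc where "Bc \<ge> 0" "\<And>n. norm (c n) \<le> Bc"
proof -
  obtain B where "\<forall>n. norm (c n) \<le> B" using cl unfolding linfty_def by blast
  then show ?thesis using that[of B] norm_ge_zero order_trans by blast
qed

lemma conv:
  assumes "\<And>n. \<tau>s n \<in> \<Delta>" and "\<And>n. norm (a n) \<le> B"
  shows "((\<lambda>n. \<tau>s n (a n)) \<longlongrightarrow> Lim \<omega> (\<lambda>n. \<tau>s n (a n))) \<omega>"
  by (rule uf_conv[OF uf, of _ B]) (meson assms order_trans trs_bound trsD)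

lemma sup0_ge:
  assumes "\<tau> \<in> \<Delta>"
  shows "Re (\<tau> (st f * f)) \<le> sup0 ((\<lambda>\<tau>. Re (\<tau> (st f * f))) ` \<Delta>)"
proof -
  have "bdd_above ((\<lambda>\<tau>. Re (\<tau> (st f * f))) ` \<Delta>)"
    by (rule bdd_aboveI[of _ "(norm f)^2"]) (auto dest: trsD trs_Re_le)
  then show ?thesis unfolding sup0_def using assms by (auto intro: cSup_upper)
qed

lemma J_tend:
  assumes f: "f \<in> J2 st \<omega> \<Delta>" and ts: "\<And>n. \<tau>s n \<in> \<Delta>" and z: "\<And>n. norm (z n) \<le> Bz"
  shows "((\<lambda>n. \<tau>s n (z n * f n)) \<longlongrightarrow> 0) \<omega>"
proof -
  define s where "s n = sup0 ((\<lambda>\<tau>. Re (\<tau> (st (f n) * f n))) ` \<Delta>)" for n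
  have st0: "(s \<longlongrightarrow> 0) \<omega>" using f unfolding J2_def s_def by blast
  have Bz0: "Bz \<ge> 0" using z[of 0] norm_ge_zero order_trans by blast
  have "((\<lambda>n. Bz * sqrt (s n)) \<longlongrightarrow> Bz * sqrt 0) \<omega>"
    by (intro tendsto_intros st0)
  then have g0: "((\<lambda>n. Bz * sqrt (s n)) \<longlongrightarrow> 0) \<omega>" by simp
  have "norm (\<tau>s n (z n * f n)) \<le> Bz * sqrt (s n)" for n
  proof -
    have t: "trs (\<tau>s n)" using ts trsD by blast
    have r0: "0 \<le> Re (\<tau>s n (st (f n) * f n))" using posf_Re[OF trs_posf[OF t]] by blast
    have "(cmod (\<tau>s n (z n * f n)))^2 \<le> (norm (z n))^2 * Re (\<tau>s n (st (f n) * f n))"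
      by (rule trs_Jbound[OF t])
    also have "\<dots> \<le> Bz^2 * s n"
      apply (rule mult_mono)
      using z[of n] sup0_ge[OF ts[of n], of "f n"] r0 Bz0 unfolding s_def
      by (auto intro: power_mono)
    finally have "cmod (\<tau>s n (z n * f n)) \<le> sqrt (Bz^2 * s n)" by (rule real_le_rsqrt)
    then show ?thesis using Bz0 by (simp add: real_sqrt_mult)
  qed
  then show ?thesis
    by (intro Lim_null_comparison[OF _ g0]) simp
qed

lemma zero_J: "(\<lambda>n. 0) \<in> J2 st \<omega> \<Delta>"
proof -
  have "(\<lambda>\<tau>. Re (\<tau> (st 0 * 0))) ` \<Delta> \<subseteq> {0}"
    by (force dest: trsD trs_posf posf_0)
  then have "sup0 ((\<lambda>\<tau>. Re (\<tau> (st 0 * 0))) ` \<Delta>) = 0" unfolding sup0_def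
    by (metis cSup_singleton subset_singletonD)
  moreover have "(\<lambda>n. 0::'a) \<in> linfty" unfolding linfty_def by auto
  ultimately show ?thesis unfolding J2_def by simp
qed


context
  fixes \<tau>s :: "nat \<Rightarrow> 'a \<Rightarrow> complex" assumes ts: "\<And>n. \<tau>s n \<in> \<Delta>"
begin

lemma tr: "trs (\<tau>s n)" using ts trsD by blast
lemma pf: "posf (\<tau>s n)" using tr trs_posf by blast

abbreviation "Lf x \<equiv> ulim_trace \<omega> \<tau>s (\<lambda>n. x * c n)"
abbreviation "Tf x \<equiv> Lim \<omega> (\<lambda>n. \<tau>s n x)"
abbreviation "Mf x \<equiv> ulim_trace \<omega> \<tau>s (\<lambda>n. x * (1 - c n))"

lemma LT: "((\<lambda>n. \<tau>s n (x * c n)) \<longlongrightarrow> Lf x) \<omega>"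
proof -
  obtain Bc where B: "Bc \<ge> 0" "\<And>n. norm (c n) \<le> Bc" using Bc by blast
  have "norm (x * c n) \<le> norm x * Bc" for n
    using norm_mult_ineq[of x "c n"] mult_left_mono[OF B(2)[of n], of "norm x"] by simp
  then show ?thesis unfolding ulim_trace_def by (rule conv[OF ts])
qed

lemma TT: "((\<lambda>n. \<tau>s n x) \<longlongrightarrow> Tf x) \<omega>"
  by (rule conv[OF ts, of "\<lambda>n. x" "norm x"]) simp

lemma MT: "((\<lambda>n. \<tau>s n (x * (1 - c n))) \<longlongrightarrow> Mf x) \<omega>"
proof -
  obtain Bc where B: "Bc \<ge> 0" "\<And>n. norm (c n) \<le> Bc" using Bc by blast
  have "norm (x * (1 - c n)) \<le> norm x * (1 + Bc)" for n
  proof -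
    have "norm (1 - c n) \<le> 1 + Bc" using norm_triangle_ineq4[of 1 "c n"] B(2)[of n] by simp
    then show ?thesis using norm_mult_ineq[of x "1 - c n"] mult_left_mono[of _ _ "norm x"]
      by (meson norm_ge_zero order_trans)
  qed
  then show ?thesis unfolding ulim_trace_def by (rule conv[OF ts])
qed

lemma M_eq: "Mf x = Tf x - Lf x"
proof -
  have "(\<lambda>n. \<tau>s n (x * (1 - c n))) = (\<lambda>n. \<tau>s n x - \<tau>s n (x * c n))"
    by (simp add: right_diff_distrib posf_diff[OF pf])
  then have "((\<lambda>n. \<tau>s n (x * (1 - c n))) \<longlongrightarrow> Tf x - Lf x) \<omega>"
    using tendsto_diff[OF TT LT] by simp
  then show ?thesis using lim_uniq[OF MT] by blast
qed

lemma T_posf: "posf Tf"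
  unfolding posf_def
proof (intro conjI allI)
  fix x y
  have "((\<lambda>n. \<tau>s n (x + y)) \<longlongrightarrow> Tf x + Tf y) \<omega>"
    using tendsto_add[OF TT[of x] TT[of y]] by (simp add: posf_add[OF pf])
  then show "Tf (x + y) = Tf x + Tf y" using lim_uniq[OF TT] by blast
next
  fix z x
  have "((\<lambda>n. \<tau>s n (scC z x)) \<longlongrightarrow> z * Tf x) \<omega>"
    using tendsto_mult_left[OF TT[of x], of z] by (simp add: posf_sc[OF pf])
  then show "Tf (scC z x) = z * Tf x" using lim_uniq[OF TT] by blast
next
  fix x
  have "((\<lambda>n. Im (\<tau>s n (st x * x))) \<longlongrightarrow> Im (Tf (st x * x))) \<omega>" by (rule tendsto_Im[OF TT])
  moreover have "(\<lambda>n. Im (\<tau>s n (st x * x))) = (\<lambda>n. 0)" using posf_Im[OF pf] by auto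
  ultimately show "Im (Tf (st x * x)) = 0" using tendsto_unique[OF nb] tendsto_const by metis
next
  fix x
  have "((\<lambda>n. Re (\<tau>s n (st x * x))) \<longlongrightarrow> Re (Tf (st x * x))) \<omega>" by (rule tendsto_Re[OF TT])
  then show "0 \<le> Re (Tf (st x * x))"
    by (rule tendsto_lowerbound) (use posf_Re[OF pf] nb in auto)
qed

lemma T_one: "Tf 1 = 1"
  using lim_uniq[OF TT[of 1], of 1] trs_one[OF tr] by simp

lemma L_lin: "Lf (x + y) = Lf x + Lf y" "Lf (scC z x) = z * Lf x"
proof -
  have "((\<lambda>n. \<tau>s n ((x + y) * c n)) \<longlongrightarrow> Lf x + Lf y) \<omega>"
    using tendsto_add[OF LT[of x] LT[of y]] by (simp add: posf_add[OF pf] distrib_right)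
  then show "Lf (x + y) = Lf x + Lf y" using lim_uniq[OF LT] by blast
  have "((\<lambda>n. \<tau>s n (scC z x * c n)) \<longlongrightarrow> z * Lf x) \<omega>"
    using tendsto_mult_left[OF LT[of x], of z] by (simp add: posf_sc[OF pf] sc_mult[symmetric])
  then show "Lf (scC z x) = z * Lf x" using lim_uniq[OF LT] by blast
qed

lemma L_pos: "Im (Lf (st y * y)) = 0 \<and> 0 \<le> Re (Lf (st y * y))"
proof -
  obtain d where d: "d \<in> linfty" "(\<lambda>n. c n - st (d n) * d n) \<in> J2 st \<omega> \<Delta>"
    using qp unfolding quot_pos_contraction_def by blast
  define u where "u n = \<tau>s n (st y * y * c n)" for n
  define w where "w n = \<tau>s n (st y * y * (c n - st (d n) * d n))" for n
  define v where "v n = \<tau>s n (st (d n * y) * (d n * y))" for n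
  have u: "(u \<longlongrightarrow> Lf (st y * y)) \<omega>" unfolding u_def by (rule LT)
  have w: "(w \<longlongrightarrow> 0) \<omega>" unfolding w_def
    by (rule J_tend[OF d(2) ts, of "\<lambda>n. st y * y" "norm (st y * y)"]) simp
  have "st y * y * c n = st (d n * y) * (d n * y) + st y * y * (c n - st (d n) * d n)" for n
    by (simp add: st_mult algebra_simps)
  then have "v n = u n - w n" for n unfolding u_def v_def w_def by (simp add: posf_add[OF pf])
  then have "v = (\<lambda>n. u n - w n)" by (simp add: fun_eq_iff)
  then have v: "(v \<longlongrightarrow> Lf (st y * y)) \<omega>" using tendsto_diff[OF u w] by simp
  have "((\<lambda>n. Im (v n)) \<longlongrightarrow> Im (Lf (st y * y))) \<omega>" by (rule tendsto_Im[OF v])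
  moreover have "(\<lambda>n. Im (v n)) = (\<lambda>n. 0)" unfolding v_def using posf_Im[OF pf] by auto
  ultimately have "Im (Lf (st y * y)) = 0" using tendsto_unique[OF nb] tendsto_const by metis
  moreover have "0 \<le> Re (Lf (st y * y))"
    by (rule tendsto_lowerbound[OF tendsto_Re[OF v]]) (use posf_Re[OF pf] nb in \<open>auto simp: v_def\<close>)
  ultimately show ?thesis by blast
qed

lemma L_posf: "posf Lf"
  unfolding posf_def using L_lin L_pos by blast

lemma L_le: "cmod (Lf (st y * y)) \<le> Re (Tf (st y * y))"
proof -
  define R where "R = Re (Tf (st y * y))"
  have R0: "R \<ge> 0" unfolding R_def using posf_Re[OF T_posf] by blast
  have main: "cmod (Lf (st y * y)) \<le> R * (1 + e)" if e: "e > 0" for e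
  proof -
    define S where "S = (\<lambda>j. linfty_norm (\<lambda>n. c n + j n)) ` J2 st \<omega> \<Delta>"
    have "S \<noteq> {}" unfolding S_def using zero_J by blast
    moreover have "Inf S < 1 + e" using qp e unfolding quot_pos_contraction_def S_def by simp
    ultimately obtain r where r: "r \<in> S" "r < 1 + e" using cInf_lessD by metis
    then obtain j where j: "j \<in> J2 st \<omega> \<Delta>" "linfty_norm (\<lambda>n. c n + j n) < 1 + e"
      unfolding S_def by blast
    have jl: "j \<in> linfty" using j(1) unfolding J2_def by blast
    have nb1: "norm (c n + j n) \<le> 1 + e" for n
    proof -
      obtain B1 where "\<forall>n. norm (c n) \<le> B1" using cl unfolding linfty_def by blast
      moreover obtain B2 where "\<forall>n. norm (j n) \<le> B2" using jl unfolding linfty_def by blast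
      ultimately have "norm (c n + j n) \<le> B1 + B2" for n
        by (meson add_mono norm_triangle_ineq order_trans)
      then have "bdd_above (range (\<lambda>n. norm (c n + j n)))"
        by (intro bdd_aboveI[of _ "B1 + B2"]) blast
      then have "norm (c n + j n) \<le> linfty_norm (\<lambda>n. c n + j n)" unfolding linfty_norm_def
        by (rule cSup_upper[rotated]) simp
      then show ?thesis using j(2) by simp
    qed
    define a where "a n = \<tau>s n (st y * y * (c n + j n))" for n
    have "a n = \<tau>s n (st y * y * c n) + \<tau>s n (st y * y * j n)" for n
      unfolding a_def by (simp add: distrib_left posf_add[OF pf])
    then have aeq: "a = (\<lambda>n. \<tau>s n (st y * y * c n) + \<tau>s n (st y * y * j n))" by (simp add: fun_eq_iff)
    moreover have "((\<lambda>n. \<tau>s n (st y * y * c n) + \<tau>s n (st y * y * j n)) \<longlongrightarrow> Lf (st y * y) + 0) \<omega>"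
      by (intro tendsto_add LT J_tend[OF j(1) ts, of "\<lambda>n. st y * y" "norm (st y * y)"]) simp
    ultimately have a: "(a \<longlongrightarrow> Lf (st y * y)) \<omega>"
      unfolding aeq by simp
    have ab: "cmod (a n) \<le> Re (\<tau>s n (st y * y)) * (1 + e)" for n
    proof -
      have "cmod (a n) \<le> Re (\<tau>s n (st y * y)) * norm (c n + j n)" unfolding a_def by (rule weighted_bound[OF tr])
      also have "\<dots> \<le> Re (\<tau>s n (st y * y)) * (1 + e)"
        by (rule mult_left_mono[OF nb1]) (use posf_Re[OF pf] in auto)
      finally show ?thesis .
    qed
    have r: "((\<lambda>n. Re (\<tau>s n (st y * y)) * (1 + e)) \<longlongrightarrow> R * (1 + e)) \<omega>"
      unfolding R_def by (intro tendsto_mult_right tendsto_Re TT)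
    show ?thesis
      by (rule tendsto_le[OF nb r tendsto_norm[OF a]]) (use ab in simp)
  qed
  have "cmod (Lf (st y * y)) \<le> R + e" if e: "e > 0" for e
  proof -
    have "cmod (Lf (st y * y)) \<le> R * (1 + e / (R + 1))" using main[of "e / (R + 1)"] e R0 by simp
    also have "\<dots> = R + e * (R / (R + 1))" using R0 by (simp add: field_simps)
    also have "\<dots> \<le> R + e * 1" using R0 e by (intro add_left_mono mult_left_mono) auto
    finally show ?thesis by simp
  qed
  then show ?thesis unfolding R_def by (rule field_le_epsilon)
qed

lemma M_posf: "posf Mf"
  unfolding posf_def M_eq
proof (intro conjI allI)
  fix x y show "Tf (x + y) - Lf (x + y) = Tf x - Lf x + (Tf y - Lf y)"
    using posf_add[OF T_posf] L_lin by simp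
next
  fix z x show "Tf (scC z x) - Lf (scC z x) = z * (Tf x - Lf x)"
    using posf_sc[OF T_posf] L_lin by (simp add: algebra_simps)
next
  fix x show "Im (Tf (st x * x) - Lf (st x * x)) = 0"
    using posf_Im[OF T_posf] L_pos by simp
next
  fix x show "0 \<le> Re (Tf (st x * x) - Lf (st x * x))"
    using L_le[of x] complex_Re_le_cmod[of "Lf (st x * x)"] by simp
qed


lemma posf_zero: "posf \<phi> \<Longrightarrow> \<phi> 1 = 0 \<Longrightarrow> \<phi> x = 0"
  using posf_CS[of \<phi> x] by simp

lemma main_ext:
  assumes ext: "\<tau> \<in> fextreme_points \<Delta>" and lim: "(\<tau>s \<longlongrightarrow> \<tau>) \<omega>"
  shows "Lf x = ulim_trace \<omega> \<tau>s c * \<tau> x"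
proof -
  define t where "t = ulim_trace \<omega> \<tau>s c"
  have Teq: "Tf z = \<tau> z" for z using lim_uniq[OF TT fun_pointwise[OF lim]] .
  have t1: "t = Lf 1" unfolding t_def by simp
  have "Im (Lf (st 1 * 1)) = 0 \<and> 0 \<le> Re (Lf (st 1 * 1))" by (rule L_pos)
  then have tIm: "Im t = 0" and tRe0: "0 \<le> Re t" unfolding t1 by auto
  have "cmod (Lf (st 1 * 1)) \<le> Re (Tf (st 1 * 1))" by (rule L_le)
  then have "cmod t \<le> 1" unfolding t1 using T_one by simp
  then have tRe1: "Re t \<le> 1" using complex_Re_le_cmod[of t] by linarith
  define r where "r = Re t"
  have tr: "t = complex_of_real r" unfolding r_def using tIm by (simp add: complex_eq_iff)
  have "Lf x = t * \<tau> x"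
  proof (cases "r = 0")
    case True
    then have "Lf 1 = 0" using t1 tr by simp
    then show ?thesis using posf_zero[OF L_posf] tr True by simp
  next
    case r0: False
    show ?thesis
    proof (cases "r = 1")
      case True
      then have "Mf 1 = 0" using M_eq[of 1] T_one t1 tr by simp
      then have "Mf x = 0" using posf_zero[OF M_posf] by blast
      then show ?thesis using M_eq[of x] Teq[of x] True tr by simp
    next
      case r1: False
      have rr: "0 < r" "r < 1" using r0 r1 tRe0 tRe1 unfolding r_def by auto
      have tn0: "t \<noteq> 0" and tn1: "t \<noteq> 1" using rr tr by auto
      have AB: "(t \<noteq> 0 \<longrightarrow> (\<lambda>x. Lf x / t) \<in> \<Delta>) \<and> (t \<noteq> 1 \<longrightarrow> (\<lambda>x. Mf x / (1 - t)) \<in> \<Delta>)"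
        unfolding t_def by (rule amp[unfolded ample_def, THEN spec, of \<tau>s, THEN mp]) (use ts in blast)
      have A: "(\<lambda>x. Lf x / t) \<in> \<Delta>" using AB tn0 by blast
      have B: "(\<lambda>x. Mf x / (1 - t)) \<in> \<Delta>" using AB tn1 by blast
      have dec: "\<tau> = (\<lambda>x. complex_of_real r * (Lf x / t) + complex_of_real (1 - r) * (Mf x / (1 - t)))"
      proof
        fix z
        have "complex_of_real r * (Lf z / t) = Lf z" using tn0 tr by simp
        moreover have "complex_of_real (1 - r) * (Mf z / (1 - t)) = Mf z" using tn1 tr by simp
        ultimately show "\<tau> z = complex_of_real r * (Lf z / t) + complex_of_real (1 - r) * (Mf z / (1 - t))"
          using M_eq[of z] Teq[of z] by simp
      qed
      have X: "\<forall>\<sigma>\<in>\<Delta>. \<forall>\<rho>\<in>\<Delta>. \<forall>t::real. 0 < t \<and> t < 1 \<and>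
          \<tau> = (\<lambda>x. complex_of_real t * \<sigma> x + complex_of_real (1 - t) * \<rho> x) \<longrightarrow> \<sigma> = \<rho>"
        using ext unfolding fextreme_points_def by simp
      have "(\<lambda>x. Lf x / t) = (\<lambda>x. Mf x / (1 - t))"
        by (rule X[rule_format, OF A B conjI[OF rr(1) conjI[OF rr(2) dec]]])
      then have e: "Mf z / (1 - t) = Lf z / t" for z by (metis fun_cong)
      have "\<tau> x = complex_of_real r * (Lf x / t) + complex_of_real (1 - r) * (Mf x / (1 - t))"
        by (rule fun_cong[OF dec])
      also have "\<dots> = complex_of_real r * (Lf x / t) + complex_of_real (1 - r) * (Lf x / t)"
        by (simp only: e)
      also have "\<dots> = Lf x / t" by (simp add: algebra_simps add_divide_distrib[symmetric])
      finally have "\<tau> x = Lf x / t" .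
      then show ?thesis using tn0 by simp
    qed
  qed
  then show ?thesis unfolding t_def .
qed

end

end


theorem lemma4p3:
  fixes scC :: "complex \<Rightarrow> 'a::{comm_ring_1,real_normed_algebra_1,banach} \<Rightarrow> 'a"
    and st :: "'a \<Rightarrow> 'a"
    and \<omega> :: "nat filter"
    and \<Delta> :: "('a \<Rightarrow> complex) set"
    and c :: "nat \<Rightarrow> 'a"
  assumes "comm_cstar_alg scC st"
    and "free_ultrafilter \<omega>"
    and "\<Delta> \<subseteq> tracial_states scC st"
    and "closed \<Delta>"
    and "fconvex \<Delta>"
    and "compact (fextreme_points \<Delta>)"
    and "c \<in> linfty"
    and "quot_pos_contraction st (J2 st \<omega> \<Delta>) c"
    and "c \<notin> J2 st \<omega> \<Delta>"
    and "ample \<omega> \<Delta> c"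
  shows "\<forall>a. ((\<lambda>k. sup0 ((\<lambda>\<tau>. cmod (\<tau> (a * c k) - \<tau> a * \<tau> (c k))) ` fextreme_points \<Delta>))
            \<longlongrightarrow> 0) \<omega>"
proof
  fix a
  interpret S: setting scC st \<omega> \<Delta> c
    using assms by (simp add: setting_def setting_axioms_def cst_def)
  define E where "E = fextreme_points \<Delta>"
  have ED: "E \<subseteq> \<Delta>" unfolding E_def fextreme_points_def by blast
  have Ec: "compact E" unfolding E_def by (rule assms(6))
  obtain Bc where Bc: "Bc \<ge> 0" "\<And>n. norm (c n) \<le> Bc" using S.Bc by blast
  define F where "F k \<tau> = cmod (\<tau> (a * c k) - \<tau> a * \<tau> (c k))" for k and \<tau> :: "'a \<Rightarrow> complex"
  define g where "g k = sup0 (F k ` E)" for k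
  have Fb: "F k \<tau> \<le> 2 * (norm a * Bc)" if "\<tau> \<in> \<Delta>" for k \<tau>
  proof -
    have t: "S.trs \<tau>" using S.trsD that by blast
    have "cmod (\<tau> (a * c k)) \<le> norm a * Bc"
      using S.trs_bound[OF t, of "a * c k"] norm_mult_ineq[of a "c k"] mult_left_mono[OF Bc(2)[of k], of "norm a"]
      by simp
    moreover have "cmod (\<tau> a * \<tau> (c k)) \<le> norm a * Bc"
      using S.trs_bound[OF t, of a] S.trs_bound[OF t, of "c k"] Bc(2)[of k]
      by (simp add: norm_mult mult_mono)
    ultimately show ?thesis unfolding F_def using norm_triangle_ineq4[of "\<tau> (a * c k)" "\<tau> a * \<tau> (c k)"]
      by simp
  qed
  have bdd: "bdd_above (F k ` E)" for k
    using Fb ED by (intro bdd_aboveI[of _ "2 * (norm a * Bc)"]) blast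
  have F0: "F k \<tau> \<ge> 0" for k \<tau> unfolding F_def by simp
  have g0: "g k \<ge> 0" for k
  proof (cases "E = {}")
    case True then show ?thesis unfolding g_def sup0_def by simp
  next
    case False
    then obtain \<tau> where "\<tau> \<in> E" by blast
    then have "F k \<tau> \<le> Sup (F k ` E)" using bdd by (intro cSup_upper) auto
    then show ?thesis unfolding g_def sup0_def using F0[of k \<tau>] False by simp
  qed
  have "(g \<longlongrightarrow> 0) \<omega>"
  proof (cases "E = {}")
    case True
    then have "g = (\<lambda>k. 0)" unfolding g_def sup0_def by simp
    then show ?thesis by simp
  next
    case Ene: False
    show ?thesis
    proof (rule ccontr)
      assume nt: "\<not> (g \<longlongrightarrow> 0) \<omega>"
      obtain e where e: "e > 0" "\<not> eventually (\<lambda>k. dist (g k) 0 < e) \<omega>"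
        using nt unfolding tendsto_iff by blast
      have "eventually (\<lambda>k. \<not> dist (g k) 0 < e) \<omega>"
        using uf_ultra[OF assms(2), of "\<lambda>k. dist (g k) 0 < e"] e(2) by blast
      then have ev: "eventually (\<lambda>k. e \<le> g k) \<omega>"
        by (rule eventually_mono) (use g0 in \<open>simp add: dist_real_def\<close>)
      have ex: "\<exists>\<tau>. \<tau> \<in> E \<and> (e \<le> g k \<longrightarrow> e / 2 < F k \<tau>)" for k
      proof (cases "e \<le> g k")
        case True
        then have "e / 2 < Sup (F k ` E)" using e(1) Ene unfolding g_def sup0_def by simp
        then obtain y where "y \<in> F k ` E" "e / 2 < y" using Ene by (meson image_is_empty less_cSupE)
        then show ?thesis by blast
      next
        case False
        then show ?thesis using Ene by blast
      qed
      have "\<exists>\<tau>s. \<forall>k. \<tau>s k \<in> E \<and> (e \<le> g k \<longrightarrow> e / 2 < F k (\<tau>s k))"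
        by (rule choice) (use ex in blast)
      then obtain \<tau>s where tsa: "\<forall>k. \<tau>s k \<in> E \<and> (e \<le> g k \<longrightarrow> e / 2 < F k (\<tau>s k))" by blast
      have ts: "\<And>k. \<tau>s k \<in> E" "\<And>k. e \<le> g k \<Longrightarrow> e / 2 < F k (\<tau>s k)" using tsa by blast+
      have tsD: "\<And>k. \<tau>s k \<in> \<Delta>" using ts(1) ED by blast
      obtain \<tau> where \<tau>: "\<tau> \<in> E" "(\<tau>s \<longlongrightarrow> \<tau>) \<omega>" using uf_compact[OF assms(2) Ec, of \<tau>s] ts(1) by blast
      have me: "ulim_trace \<omega> \<tau>s (\<lambda>n. a * c n) = ulim_trace \<omega> \<tau>s c * \<tau> a"
        by (rule S.main_ext[OF tsD \<tau>(1)[unfolded E_def] \<tau>(2)])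
      have l1: "((\<lambda>k. \<tau>s k (a * c k)) \<longlongrightarrow> ulim_trace \<omega> \<tau>s (\<lambda>n. a * c n)) \<omega>" by (rule S.LT[OF tsD])
      have l2: "((\<lambda>k. \<tau>s k a) \<longlongrightarrow> \<tau> a) \<omega>" by (rule fun_pointwise[OF \<tau>(2)])
      have l3: "((\<lambda>k. \<tau>s k (c k)) \<longlongrightarrow> ulim_trace \<omega> \<tau>s c) \<omega>" using S.LT[OF tsD, where x=1] by simp
      have "((\<lambda>k. \<tau>s k (a * c k) - \<tau>s k a * \<tau>s k (c k)) \<longlongrightarrow>
          ulim_trace \<omega> \<tau>s (\<lambda>n. a * c n) - \<tau> a * ulim_trace \<omega> \<tau>s c) \<omega>"
        by (intro tendsto_intros l1 l2 l3)
      then have "((\<lambda>k. \<tau>s k (a * c k) - \<tau>s k a * \<tau>s k (c k)) \<longlongrightarrow> 0) \<omega>" unfolding me by simp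
      then have "eventually (\<lambda>k. dist (\<tau>s k (a * c k) - \<tau>s k a * \<tau>s k (c k)) 0 < e / 2) \<omega>"
        by (rule tendstoD) (use e(1) in simp)
      then have ev1: "eventually (\<lambda>k. F k (\<tau>s k) < e / 2) \<omega>"
        by (rule eventually_mono) (simp add: F_def dist_norm)
      have ev2: "eventually (\<lambda>k. e / 2 < F k (\<tau>s k)) \<omega>"
        by (rule eventually_mono[OF ev]) (rule ts(2))
      have "eventually (\<lambda>k. F k (\<tau>s k) < e / 2 \<and> e / 2 < F k (\<tau>s k)) \<omega>"
        by (rule eventually_conj[OF ev1 ev2])
      then have "eventually (\<lambda>k. False) \<omega>" by (rule eventually_mono) linarith
      then show False using uf_nonbot[OF assms(2)] by (simp add: eventually_False)
    qed
  qed
  then show "((\<lambda>k. sup0 ((\<lambda>\<tau>. cmod (\<tau> (a * c k) - \<tau> a * \<tau> (c k))) ` fextreme_points \<Delta>)) \<longlongrightarrow> 0) \<omega>"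
    unfolding g_def F_def E_def .
qed

end
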